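(* Under the standing setting below, let $\alpha>0$, $C_0>0$, let $(x_0,y_0)$ satisfy $h(x_0,y_0)\le\alpha^2C_0$, take $\rho(x,y)=\|\nabla h(x,y)\|\,h(x_0,y_0)^{1/2}$, fix an integer $K\ge1$ and $\gamma=\min\{K^{-2/3},1/L_f\}$, and run the Algorithm. Define $B_\Delta=2C_f+\alpha^2\sqrt{C_0}$. Then $$\frac1K\sum_{k=0}^{K-1}\big(\|\Delta_k^x\|^2+\|\Delta_k^y\|^2\big)\le\frac{2(f_0-\bar f)}{\gamma K}+\alpha^2(B_\Delta^2+C_0),$$ and $$\frac1K\sum_{k=0}^{K-1}h_k\le\alpha^2C_0+\frac{\gamma^2L_hB_\Delta^2}{2}\cdot\frac{K-1}{2},$$ where $f_0=f(x_0,y_0)$.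
   Context: Standing setting. $f,g:\mathbb{R}^n\times\mathbb{R}^m\to\mathbb{R}$. $f$ is continuously differentiable, $\bar f:=\inf f>-\infty$, $\nabla f$ is $L_f$-Lipschitz, and $\|\nabla f\|\le C_f$ everywhere. $g$ is twice continuously differentiable, and $h(x,y):=\|\nabla_y g(x,y)\|^2$ is continuously differentiable with $\nabla h$ being $L_h$-Lipschitz ($L_h>0$). Write $\nabla h=(\nabla_x h,\nabla_y h)$, $f_k=f(x_k,y_k)$, $h_k=h(x_k,y_k)$, $\nabla f_k=\nabla f(x_k,y_k)$, $\nabla h_k=\nabla h(x_k,y_k)$, etc. Given $\rho\ge0$, $\alpha,\gamma>0$, $(x_0,y_0)$, the Algorithm iterates for $k\ge0$: $\lambda_k=\big[-\nabla_x h_k^\top\nabla_x f_k-\nabla_y h_k^\top\nabla_y f_k+\alpha\rho(x_k,y_k)\big]_+/(\|\nabla_x h_k\|^2+\|\nabla_y h_k\|^2)$ if $\nabla h_k\ne0$, $\lambda_k=0$ otherwise ($[t]_+=\max\{0,t\}$); $\Delta_k^x=-\nabla_x f_k-\lambda_k\nabla_x h_k$, $\Delta_k^y=-\nabla_y f_k-\lambda_k\nabla_y h_k$; $x_{k+1}=x_k+\gamma\Delta_k^x$, $y_{k+1}=y_k+\gamma\Delta_k^y$. *)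

theory Defs
  imports "HOL-Analysis.Analysis"
begin

text \<open>Points of R^n x R^m are pairs; a gradient G :: point => point has
  components fst (G p) = partial gradient in x, snd (G p) = partial gradient in y.\<close>

type_synonym ('n,'m) pt = "(real^'n) \<times> (real^'m)"

definition alg_lambda ::
  "(('n::finite,'m::finite) pt \<Rightarrow> ('n,'m) pt) \<Rightarrow> (('n,'m) pt \<Rightarrow> ('n,'m) pt)
   \<Rightarrow> (('n,'m) pt \<Rightarrow> real) \<Rightarrow> real \<Rightarrow> ('n,'m) pt \<Rightarrow> real" where
  "alg_lambda Gf Gh rho \<alpha> p =
     (if Gh p \<noteq> 0 then
        max 0 (- (fst (Gh p) \<bullet> fst (Gf p)) - (snd (Gh p) \<bullet> snd (Gf p)) + \<alpha> * rho p)
        / ((norm (fst (Gh p)))\<^sup>2 + (norm (snd (Gh p)))\<^sup>2)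
      else 0)"

definition alg_dir ::
  "(('n::finite,'m::finite) pt \<Rightarrow> ('n,'m) pt) \<Rightarrow> (('n,'m) pt \<Rightarrow> ('n,'m) pt)
   \<Rightarrow> (('n,'m) pt \<Rightarrow> real) \<Rightarrow> real \<Rightarrow> ('n,'m) pt \<Rightarrow> ('n,'m) pt" where
  "alg_dir Gf Gh rho \<alpha> p =
     (- fst (Gf p) - alg_lambda Gf Gh rho \<alpha> p *\<^sub>R fst (Gh p),
      - snd (Gf p) - alg_lambda Gf Gh rho \<alpha> p *\<^sub>R snd (Gh p))"

primrec alg_iter ::
  "(('n::finite,'m::finite) pt \<Rightarrow> ('n,'m) pt) \<Rightarrow> (('n,'m) pt \<Rightarrow> ('n,'m) pt)
   \<Rightarrow> (('n,'m) pt \<Rightarrow> real) \<Rightarrow> real \<Rightarrow> real \<Rightarrow> ('n,'m) pt \<Rightarrow> nat \<Rightarrow> ('n,'m) pt" where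
  "alg_iter Gf Gh rho \<alpha> \<gamma> p0 0 = p0"
| "alg_iter Gf Gh rho \<alpha> \<gamma> p0 (Suc k) =
     (let p = alg_iter Gf Gh rho \<alpha> \<gamma> p0 k
      in (fst p + \<gamma> *\<^sub>R fst (alg_dir Gf Gh rho \<alpha> p),
          snd p + \<gamma> *\<^sub>R snd (alg_dir Gf Gh rho \<alpha> p)))"

end

theory Submission
  imports Defs
begin

lemma descent:
  fixes f :: "'a::real_inner \<Rightarrow> real"
  assumes fg: "\<And>p. (f has_derivative (\<lambda>d. G p \<bullet> d)) (at p)"
    and lip: "L-lipschitz_on UNIV G"
  shows "f q \<le> f p + G p \<bullet> (q - p) + L / 2 * (norm (q - p))\<^sup>2"
proof -
  define d where "d = q - p"
  define \<phi> where "\<phi> t = f (p + t *\<^sub>R d) - t * (G p \<bullet> d) - L / 2 * t\<^sup>2 * (norm d)\<^sup>2" for t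
  have L0: "L \<ge> 0" using lip lipschitz_on_nonneg by blast
  have "\<phi> 1 \<le> \<phi> 0"
  proof (rule DERIV_nonpos_imp_nonincreasing[of 0 1])
    fix t :: real assume t: "0 \<le> t" "t \<le> 1"
    have d1: "((\<lambda>t. f (p + t *\<^sub>R d)) has_real_derivative (G (p + t *\<^sub>R d) \<bullet> d)) (at t)"
    proof -
      have "((\<lambda>t. p + t *\<^sub>R d) has_derivative (\<lambda>s. s *\<^sub>R d)) (at t)"
        by (auto intro!: derivative_eq_intros)
      from has_derivative_compose[OF this fg]
      have "((\<lambda>t. f (p + t *\<^sub>R d)) has_derivative (\<lambda>s. G (p + t *\<^sub>R d) \<bullet> (s *\<^sub>R d))) (at t)" .
      moreover have "(\<lambda>s. G (p + t *\<^sub>R d) \<bullet> (s *\<^sub>R d)) = (*) (G (p + t *\<^sub>R d) \<bullet> d)"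
        by (auto simp: fun_eq_iff)
      ultimately show ?thesis
        by (simp add: has_field_derivative_def)
    qed
    have "(\<phi> has_real_derivative (G (p + t *\<^sub>R d) \<bullet> d - G p \<bullet> d - L / 2 * (2 * t) * (norm d)\<^sup>2)) (at t)"
      unfolding \<phi>_def
      by (rule derivative_eq_intros d1 refl | simp)+
    moreover have "G (p + t *\<^sub>R d) \<bullet> d - G p \<bullet> d - L / 2 * (2 * t) * (norm d)\<^sup>2 \<le> 0"
    proof -
      have "G (p + t *\<^sub>R d) \<bullet> d - G p \<bullet> d = (G (p + t *\<^sub>R d) - G p) \<bullet> d"
        by (simp add: inner_diff_left)
      also have "\<dots> \<le> norm (G (p + t *\<^sub>R d) - G p) * norm d"
        by (rule norm_cauchy_schwarz)
      also have "\<dots> \<le> (L * norm (t *\<^sub>R d)) * norm d"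
        using lipschitz_onD[OF lip, of "p + t *\<^sub>R d" p]
        by (intro mult_right_mono) (auto simp: dist_norm)
      also have "\<dots> = L * t * (norm d)\<^sup>2" using t by (simp add: power2_eq_square)
      finally show ?thesis by simp
    qed
    ultimately show "\<exists>y. (\<phi> has_real_derivative y) (at t) \<and> y \<le> 0" by blast
  qed simp
  then show ?thesis unfolding \<phi>_def d_def by simp
qed

lemma step_props:
  fixes gf gh :: "'a::real_inner"
  assumes s0: "s \<ge> 0" and a0: "\<alpha> > 0"
  defines "lam \<equiv> (if gh \<noteq> 0 then max 0 (- (gh \<bullet> gf) + \<alpha> * (norm gh * s)) / (norm gh)\<^sup>2 else 0)"
  defines "D \<equiv> - gf - lam *\<^sub>R gh"
  shows "gh \<bullet> D \<le> 0" "gf \<bullet> D \<le> - (norm D)\<^sup>2 + \<alpha> * s * (norm gf + \<alpha> * s)"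
    "norm D \<le> 2 * norm gf + \<alpha> * s"
proof -
  have cs: "\<bar>gh \<bullet> gf\<bar> \<le> norm gh * norm gf" by (rule Cauchy_Schwarz_ineq2)
  have gfD: "gf \<bullet> D = - (norm D)\<^sup>2 - lam * (gh \<bullet> D)"
  proof -
    have "gf = - D - lam *\<^sub>R gh" unfolding D_def by simp
    then have "gf \<bullet> D = (- D - lam *\<^sub>R gh) \<bullet> D" by simp
    also have "\<dots> = - (D \<bullet> D) - lam * (gh \<bullet> D)" by (simp add: inner_diff_left)
    finally show ?thesis by (simp add: power2_norm_eq_inner)
  qed
  have "gh \<bullet> D \<le> 0 \<and> gf \<bullet> D \<le> - (norm D)\<^sup>2 + \<alpha> * s * (norm gf + \<alpha> * s)
    \<and> norm D \<le> 2 * norm gf + \<alpha> * s"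
  proof (cases "gh = 0")
    case True
    then have "lam = 0" "D = - gf" unfolding lam_def D_def by auto
    then show ?thesis using gfD s0 a0 True by simp
  next
    case False
    define n where "n = norm gh"
    define a where "a = gh \<bullet> gf"
    define m where "m = max 0 (- a + \<alpha> * (n * s))"
    have n0: "n > 0" using False n_def by simp
    have lam: "lam = m / n\<^sup>2" using False unfolding lam_def m_def n_def a_def by simp
    have ghD: "gh \<bullet> D = - a - m"
    proof -
      have "gh \<bullet> D = - a - lam * (gh \<bullet> gh)" unfolding D_def a_def
        by (simp add: inner_diff_right)
      also have "gh \<bullet> gh = n\<^sup>2" unfolding n_def by (simp add: power2_norm_eq_inner)
      finally show ?thesis using lam n0 by simp
    qed
    have m0: "m \<ge> 0" unfolding m_def by simp
    have mle: "m \<le> n * norm gf + \<alpha> * (n * s)" unfolding m_def a_def n_def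
      using cs s0 a0 by auto
    have mn: "m / n \<le> norm gf + \<alpha> * s"
      using mle n0 by (simp add: divide_le_eq algebra_simps)
    have "gh \<bullet> D \<le> 0" using ghD m_def s0 a0 n0 by (smt (verit) mult_nonneg_nonneg)
    moreover have "- lam * (gh \<bullet> D) \<le> \<alpha> * s * (norm gf + \<alpha> * s)"
    proof (cases "m = 0")
      case True then show ?thesis using lam s0 a0 by simp
    next
      case False
      then have "m = - a + \<alpha> * (n * s)" unfolding m_def by auto
      then have "gh \<bullet> D = - \<alpha> * (n * s)" using ghD by simp
      then have "- lam * (gh \<bullet> D) = \<alpha> * s * (m / n)"
        using lam n0 by (simp add: power2_eq_square field_simps)
      also have "\<dots> \<le> \<alpha> * s * (norm gf + \<alpha> * s)"
        using mn s0 a0 by (intro mult_left_mono) auto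
      finally show ?thesis .
    qed
    moreover have "norm D \<le> 2 * norm gf + \<alpha> * s"
    proof -
      have "norm D \<le> norm gf + norm (lam *\<^sub>R gh)" unfolding D_def
        by (metis norm_minus_cancel norm_triangle_ineq4)
      also have "norm (lam *\<^sub>R gh) = m / n"
        using lam n0 m0 n_def by (simp add: power2_eq_square)
      finally show ?thesis using mn by simp
    qed
    ultimately show ?thesis using gfD by simp
  qed
  then show "gh \<bullet> D \<le> 0" "gf \<bullet> D \<le> - (norm D)\<^sup>2 + \<alpha> * s * (norm gf + \<alpha> * s)"
    "norm D \<le> 2 * norm gf + \<alpha> * s" by auto
qed

lemma sum_nat_real: "(\<Sum>k<K. real k) = real K * (real K - 1) / 2"
  by (induction K) (auto simp: field_simps)

theorem theorem2:
  fixes f g h :: "(real^'n) \<times> (real^'m) \<Rightarrow> real"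
    and Gf Gg Gh :: "(real^'n) \<times> (real^'m) \<Rightarrow> (real^'n) \<times> (real^'m)"
    and Hg :: "(real^'n) \<times> (real^'m) \<Rightarrow> ((real^'n) \<times> (real^'m)) \<Rightarrow>\<^sub>L ((real^'n) \<times> (real^'m))"
    and L_f C_f L_h \<alpha> C\<^sub>0 :: real
    and x0 :: "real^'n" and y0 :: "real^'m"
    and K :: nat
  assumes f_grad: "\<And>p. (f has_derivative (\<lambda>d. Gf p \<bullet> d)) (at p)"
    and f_C1: "continuous_on UNIV Gf"
    and f_bdd: "bdd_below (range f)"
    and Lf_pos: "L_f > 0"
    and Gf_lip: "L_f-lipschitz_on UNIV Gf"
    and Gf_bd: "\<And>p. norm (Gf p) \<le> C_f"
    and g_grad: "\<And>p. (g has_derivative (\<lambda>d. Gg p \<bullet> d)) (at p)"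
    and g_hess: "\<And>p. (Gg has_derivative blinfun_apply (Hg p)) (at p)"
    and g_C2: "continuous_on UNIV Hg"
    and h_def: "\<And>p. h p = (norm (snd (Gg p)))\<^sup>2"
    and h_grad: "\<And>p. (h has_derivative (\<lambda>d. Gh p \<bullet> d)) (at p)"
    and h_C1: "continuous_on UNIV Gh"
    and Lh_pos: "L_h > 0"
    and Gh_lip: "L_h-lipschitz_on UNIV Gh"
    and alpha_pos: "\<alpha> > 0"
    and C0_pos: "C\<^sub>0 > 0"
    and init: "h (x0, y0) \<le> \<alpha>\<^sup>2 * C\<^sub>0"
    and K_ge: "K \<ge> 1"
  shows
    "let rho = (\<lambda>p. norm (Gh p) * sqrt (h (x0, y0)));
         \<gamma> = min (real K powr (-2/3)) (1 / L_f);
         z = alg_iter Gf Gh rho \<alpha> \<gamma> (x0, y0);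
         \<Delta> = (\<lambda>k. alg_dir Gf Gh rho \<alpha> (z k));
         B\<^sub>\<Delta> = 2 * C_f + \<alpha>\<^sup>2 * sqrt C\<^sub>0;
         fbar = (INF p. f p)
     in (1 / real K) * (\<Sum>k<K. (norm (fst (\<Delta> k)))\<^sup>2 + (norm (snd (\<Delta> k)))\<^sup>2)
          \<le> 2 * (f (x0, y0) - fbar) / (\<gamma> * real K) + \<alpha>\<^sup>2 * (B\<^sub>\<Delta>\<^sup>2 + C\<^sub>0)
      \<and> (1 / real K) * (\<Sum>k<K. h (z k))
          \<le> \<alpha>\<^sup>2 * C\<^sub>0 + \<gamma>\<^sup>2 * L_h * B\<^sub>\<Delta>\<^sup>2 / 2 * ((real K - 1) / 2)"
proof -
  define h0 where "h0 = h (x0, y0)"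
  define rho where "rho = (\<lambda>p. norm (Gh p) * sqrt (h (x0, y0)))"
  define \<gamma> where "\<gamma> = min (real K powr (-2/3)) (1 / L_f)"
  define z where "z = alg_iter Gf Gh rho \<alpha> \<gamma> (x0, y0)"
  define D where "D = (\<lambda>k. alg_dir Gf Gh rho \<alpha> (z k))"
  define B where "B = 2 * C_f + \<alpha>\<^sup>2 * sqrt C\<^sub>0"
  define fbar where "fbar = (INF p. f p)"
  define s where "s = sqrt h0"
  define E where "E = \<alpha>\<^sup>2 * sqrt C\<^sub>0 * C_f + \<alpha>^4 * C\<^sub>0"
  have h0: "h0 \<ge> 0" unfolding h0_def h_def by simp
  have s0: "s \<ge> 0" unfolding s_def using h0 by simp
  have sle: "s \<le> \<alpha> * sqrt C\<^sub>0"
  proof -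
    have "s \<le> sqrt (\<alpha>\<^sup>2 * C\<^sub>0)" unfolding s_def h0_def using init by simp
    also have "\<dots> = \<alpha> * sqrt C\<^sub>0" using alpha_pos by (simp add: real_sqrt_mult)
    finally show ?thesis .
  qed
  have Cf0: "C_f \<ge> 0" using Gf_bd[of 0] norm_ge_zero order_trans by blast
  have gpos: "\<gamma> > 0" unfolding \<gamma>_def using Lf_pos K_ge by simp
  have gL: "\<gamma> * L_f \<le> 1" unfolding \<gamma>_def using Lf_pos
    by (smt (verit) min.cobounded2 mult_right_mono nonzero_eq_divide_eq mult.commute)
  have Kpos: "real K > 0" using K_ge by simp
  define lam where "lam p = (if Gh p \<noteq> 0 then max 0 (- (Gh p \<bullet> Gf p) + \<alpha> * (norm (Gh p) * s)) / (norm (Gh p))\<^sup>2 else 0)" for p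
  have alam: "alg_lambda Gf Gh rho \<alpha> p = lam p" for p
  proof -
    have "- (fst (Gh p) \<bullet> fst (Gf p)) - (snd (Gh p) \<bullet> snd (Gf p)) = - (Gh p \<bullet> Gf p)"
      by (simp add: inner_prod_def)
    moreover have "(norm (fst (Gh p)))\<^sup>2 + (norm (snd (Gh p)))\<^sup>2 = (norm (Gh p))\<^sup>2"
      by (simp add: norm_prod_def)
    ultimately show ?thesis unfolding alg_lambda_def lam_def rho_def s_def h0_def
      by (simp add: mult.assoc)
  qed
  have Deq: "D k = - Gf (z k) - lam (z k) *\<^sub>R Gh (z k)" for k
    unfolding D_def alg_dir_def alam by (simp add: prod_eq_iff)
  have zS: "z (Suc k) = z k + \<gamma> *\<^sub>R D k" for k
    unfolding z_def D_def by (simp add: Let_def prod_eq_iff)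
  have sp: "Gh (z k) \<bullet> D k \<le> 0" "Gf (z k) \<bullet> D k \<le> - (norm (D k))\<^sup>2 + \<alpha> * s * (norm (Gf (z k)) + \<alpha> * s)"
    "norm (D k) \<le> 2 * norm (Gf (z k)) + \<alpha> * s" for k
    unfolding Deq lam_def using step_props[OF s0 alpha_pos, where gf="Gf (z k)" and gh="Gh (z k)"] by auto
  have DB: "norm (D k) \<le> B" for k
  proof -
    have "norm (D k) \<le> 2 * norm (Gf (z k)) + \<alpha> * s" by (rule sp(3))
    also have "\<dots> \<le> 2 * C_f + \<alpha> * (\<alpha> * sqrt C\<^sub>0)"
      using Gf_bd[of "z k"] sle alpha_pos by (intro add_mono mult_left_mono) auto
    finally show ?thesis unfolding B_def by (simp add: power2_eq_square)
  qed
  have B0: "B \<ge> 0" unfolding B_def using Cf0 C0_pos by simp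
  have hstep: "h (z (Suc k)) \<le> h (z k) + L_h / 2 * \<gamma>\<^sup>2 * B\<^sup>2" for k
  proof -
    have "h (z (Suc k)) \<le> h (z k) + Gh (z k) \<bullet> (z (Suc k) - z k) + L_h / 2 * (norm (z (Suc k) - z k))\<^sup>2"
      by (rule descent[OF h_grad Gh_lip])
    also have "\<dots> = h (z k) + \<gamma> * (Gh (z k) \<bullet> D k) + L_h / 2 * \<gamma>\<^sup>2 * (norm (D k))\<^sup>2"
      using gpos by (simp add: zS power_mult_distrib)
    also have "\<dots> \<le> h (z k) + 0 + L_h / 2 * \<gamma>\<^sup>2 * B\<^sup>2"
    proof -
      have "\<gamma> * (Gh (z k) \<bullet> D k) \<le> 0" using sp(1)[of k] gpos by (simp add: mult_nonneg_nonpos)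
      moreover have "(norm (D k))\<^sup>2 \<le> B\<^sup>2" using DB[of k] by (simp add: power_mono)
      then have "L_h / 2 * \<gamma>\<^sup>2 * (norm (D k))\<^sup>2 \<le> L_h / 2 * \<gamma>\<^sup>2 * B\<^sup>2"
        using Lh_pos by (intro mult_left_mono) auto
      ultimately show ?thesis by linarith
    qed
    finally show ?thesis by simp
  qed
  have Ebd: "\<alpha> * s * (norm (Gf (z k)) + \<alpha> * s) \<le> E" for k
  proof -
    have "\<alpha> * s * (norm (Gf (z k)) + \<alpha> * s) \<le> \<alpha> * (\<alpha> * sqrt C\<^sub>0) * (C_f + \<alpha> * (\<alpha> * sqrt C\<^sub>0))"
      using sle s0 alpha_pos Gf_bd[of "z k"]
      by (intro mult_mono add_mono mult_left_mono) auto
    also have "\<dots> = E" unfolding E_def using C0_pos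
      by (simp add: power2_eq_square power4_eq_xxxx algebra_simps)
    finally show ?thesis .
  qed
  have fstep: "f (z (Suc k)) \<le> f (z k) - \<gamma> / 2 * (norm (D k))\<^sup>2 + \<gamma> * E" for k
  proof -
    have "f (z (Suc k)) \<le> f (z k) + Gf (z k) \<bullet> (z (Suc k) - z k) + L_f / 2 * (norm (z (Suc k) - z k))\<^sup>2"
      by (rule descent[OF f_grad Gf_lip])
    also have "\<dots> = f (z k) + \<gamma> * (Gf (z k) \<bullet> D k) + (\<gamma> * L_f) * (\<gamma> / 2) * (norm (D k))\<^sup>2"
      using gpos by (simp add: zS power_mult_distrib power2_eq_square)
    also have "\<dots> \<le> f (z k) + \<gamma> * (- (norm (D k))\<^sup>2 + E) + 1 * (\<gamma> / 2) * (norm (D k))\<^sup>2"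
      using sp(2)[of k] Ebd[of k] gpos gL Lf_pos
      by (intro add_mono mult_left_mono mult_right_mono order_refl) auto
    finally show ?thesis by (simp add: algebra_simps)
  qed
  have hind: "h (z k) \<le> h0 + real k * (L_h / 2 * \<gamma>\<^sup>2 * B\<^sup>2)" for k
  proof (induction k)
    case 0 then show ?case by (simp add: z_def h0_def)
  next
    case (Suc k)
    have "real (Suc k) * (L_h / 2 * \<gamma>\<^sup>2 * B\<^sup>2) = real k * (L_h / 2 * \<gamma>\<^sup>2 * B\<^sup>2) + L_h / 2 * \<gamma>\<^sup>2 * B\<^sup>2"
      by (simp add: distrib_right)
    then show ?case using hstep[of k] Suc.IH by linarith
  qed
  have find: "f (z n) \<le> f (x0, y0) - \<gamma> / 2 * (\<Sum>k<n. (norm (D k))\<^sup>2) + real n * (\<gamma> * E)" for n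
  proof (induction n)
    case 0 then show ?case by (simp add: z_def)
  next
    case (Suc n)
    have "real (Suc n) * (\<gamma> * E) = real n * (\<gamma> * E) + \<gamma> * E"
      by (simp add: distrib_right)
    moreover have "\<gamma> / 2 * (\<Sum>k<Suc n. (norm (D k))\<^sup>2) = \<gamma> / 2 * (\<Sum>k<n. (norm (D k))\<^sup>2) + \<gamma> / 2 * (norm (D n))\<^sup>2"
      by (simp add: distrib_left)
    ultimately show ?case using fstep[of n] Suc.IH by linarith
  qed
  have fb: "fbar \<le> f (z K)" unfolding fbar_def using f_bdd by (rule cINF_lower) simp
  have part1: "(1 / real K) * (\<Sum>k<K. (norm (fst (D k)))\<^sup>2 + (norm (snd (D k)))\<^sup>2)
          \<le> 2 * (f (x0, y0) - fbar) / (\<gamma> * real K) + \<alpha>\<^sup>2 * (B\<^sup>2 + C\<^sub>0)"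
  proof -
    have nn: "(norm (fst (D k)))\<^sup>2 + (norm (snd (D k)))\<^sup>2 = (norm (D k))\<^sup>2" for k
      by (simp add: norm_prod_def)
    have S: "(\<Sum>k<K. (norm (D k))\<^sup>2) \<le> 2 * (f (x0, y0) - fbar) / \<gamma> + real K * (2 * E)"
      using find[of K] fb gpos by (simp add: field_simps)
    have E2: "2 * E \<le> \<alpha>\<^sup>2 * (B\<^sup>2 + C\<^sub>0)"
    proof -
      define u where "u = sqrt C\<^sub>0"
      define a where "a = \<alpha>\<^sup>2"
      have u0: "u \<ge> 0" unfolding u_def using C0_pos by simp
      have C0u: "C\<^sub>0 = u * u" unfolding u_def using C0_pos by simp
      have Eu0: "E = a * u * C_f + a * a * C\<^sub>0" unfolding E_def a_def u_def
        by (simp add: power2_eq_square power4_eq_xxxx)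
      have Eu: "E = a * u * C_f + a * a * (u * u)" using Eu0 C0u by simp
      have Bu: "B = 2 * C_f + a * u" unfolding B_def a_def u_def by simp
      have nn: "0 \<le> (2 * C_f + (a - 1) * u)\<^sup>2 + 2 * C_f * u" using Cf0 u0 by simp
      have key: "2 * u * C_f + 2 * a * (u * u) \<le> (2 * C_f + a * u)\<^sup>2 + u * u"
        using nn by (simp add: power2_eq_square algebra_simps)
      have a0: "a \<ge> 0" unfolding a_def by simp
      have "2 * E = a * (2 * u * C_f + 2 * a * (u * u))" unfolding Eu by (simp add: algebra_simps)
      also have "\<dots> \<le> a * ((2 * C_f + a * u)\<^sup>2 + u * u)" using key a0 by (rule mult_left_mono)
      also have "\<dots> = \<alpha>\<^sup>2 * (B\<^sup>2 + C\<^sub>0)" using Bu C0u a_def by simp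
      finally show ?thesis .
    qed
    have "(1 / real K) * (\<Sum>k<K. (norm (fst (D k)))\<^sup>2 + (norm (snd (D k)))\<^sup>2)
        = (\<Sum>k<K. (norm (D k))\<^sup>2) / real K" using nn by simp
    also have "\<dots> \<le> (2 * (f (x0, y0) - fbar) / \<gamma> + real K * (2 * E)) / real K"
      using S Kpos by (simp add: divide_right_mono)
    also have "\<dots> = 2 * (f (x0, y0) - fbar) / (\<gamma> * real K) + 2 * E"
      using Kpos gpos by (simp add: field_simps)
    also have "\<dots> \<le> 2 * (f (x0, y0) - fbar) / (\<gamma> * real K) + \<alpha>\<^sup>2 * (B\<^sup>2 + C\<^sub>0)"
      using E2 by simp
    finally show ?thesis .
  qed
  have part2: "(1 / real K) * (\<Sum>k<K. h (z k))
          \<le> \<alpha>\<^sup>2 * C\<^sub>0 + \<gamma>\<^sup>2 * L_h * B\<^sup>2 / 2 * ((real K - 1) / 2)"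
  proof -
    define c where "c = L_h / 2 * \<gamma>\<^sup>2 * B\<^sup>2"
    have "(\<Sum>k<K. h (z k)) \<le> (\<Sum>k<K. h0 + c * real k)"
      using hind unfolding c_def by (intro sum_mono) (simp add: mult.commute)
    also have "\<dots> = real K * h0 + c * (real K * (real K - 1) / 2)"
      by (simp add: sum.distrib sum_distrib_left[symmetric] sum_nat_real)
    finally have S: "(\<Sum>k<K. h (z k)) \<le> real K * h0 + c * (real K * (real K - 1) / 2)" .
    have "(1 / real K) * (\<Sum>k<K. h (z k)) \<le> (1 / real K) * (real K * h0 + c * (real K * (real K - 1) / 2))"
      using S Kpos by (intro mult_left_mono) auto
    also have "\<dots> = h0 + c * ((real K - 1) / 2)" using Kpos by (simp add: field_simps)
    also have "\<dots> \<le> \<alpha>\<^sup>2 * C\<^sub>0 + \<gamma>\<^sup>2 * L_h * B\<^sup>2 / 2 * ((real K - 1) / 2)"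
      using init unfolding h0_def c_def by (simp add: algebra_simps)
    finally show ?thesis .
  qed
  show ?thesis
    using part1 part2
    unfolding Let_def rho_def[symmetric] \<gamma>_def[symmetric] z_def[symmetric] D_def[symmetric]
      B_def[symmetric] fbar_def[symmetric]
    by (simp add: D_def)
qed

end
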